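(* Let $G:[-1,1]\to\mathbb{R}$ be continuous and non-decreasing with $G(0)=0$, $\beta\in\mathbb{R}$, $Z$ a real random variable and $B$ an independent standard Brownian motion. For $\ell\in\mathbb M$ define $\Gamma[\ell]_t:=\mathbb{P}(\tau^\ell\le t)$, $t\ge0$, where $X^\ell_t:=Z+\beta t+B_t-G(\ell_t)$ and $\tau^\ell:=\inf\{t\ge0:X^\ell_t\le0\}$. Then for any $(\ell^n)_{n\ge1}\subset\mathbb M$ and $\ell\in\mathbb M$ with $\lim_{n\to\infty}\hat d(\ell^n,\ell)=0$, $$\limsup_{n\to\infty}\Gamma[\ell^n]_t\le\Gamma[\ell]_t\quad\text{for all }t\ge0.$$
   Context: $\mathbb M$ is the set of non-decreasing càdlàg functions $\ell$ on $[-1,\infty)$ with $\ell_t=0$ for $t\in[-1,0)$ and $\ell_\infty:=\lim_{t\to\infty}\ell_t\le1$. The Lévy distance on $\mathbb M$ is $d(\ell,\ell'):=\inf\{\varepsilon>0:\ \ell_{t+\varepsilon}+\varepsilon\ge\ell'_t\ge\ell_{t-\varepsilon}-\varepsilon\ \forall t\ge0\}$. For $t\ge0$ let $\ell_{t\wedge}$ denote the function $s\mapsto\ell_{\min(t,s)}$, $d_t(\ell,\ell'):=d(\ell_{t\wedge},\ell'_{t\wedge})$, and $\hat d(\ell,\ell'):=\int_0^\infty e^{-t}(d_t(\ell,\ell')\wedge1)\,\mathrm dt$. *)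

theory Defs
  imports "HOL-Probability.Probability"
begin

text \<open>The class M of non-decreasing cadlag functions on [-1,infinity), vanishing on [-1,0),
  with limit at infinity at most 1.  Functions are represented on all of the reals, with the
  convention that they vanish on all negative reals (which agrees with the paper on [-1,0)).\<close>
definition Mset :: "(real \<Rightarrow> real) set" where
  "Mset = {l. (\<forall>s<0. l s = 0) \<and> mono l \<and> (\<forall>t. continuous (at_right t) l)
              \<and> (\<forall>t. l t \<le> 1)}"

definition levy_dist :: "(real \<Rightarrow> real) \<Rightarrow> (real \<Rightarrow> real) \<Rightarrow> real" where
  "levy_dist l l' = Inf {\<epsilon>. \<epsilon> > 0 \<and>
      (\<forall>t\<ge>0. l (t + \<epsilon>) + \<epsilon> \<ge> l' t \<and> l' t \<ge> l (t - \<epsilon>) - \<epsilon>)}"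

definition stopped :: "real \<Rightarrow> (real \<Rightarrow> real) \<Rightarrow> (real \<Rightarrow> real)" where
  "stopped t l = (\<lambda>s. l (min t s))"

definition levy_dist_t :: "real \<Rightarrow> (real \<Rightarrow> real) \<Rightarrow> (real \<Rightarrow> real) \<Rightarrow> real" where
  "levy_dist_t t l l' = levy_dist (stopped t l) (stopped t l')"

definition hat_d :: "(real \<Rightarrow> real) \<Rightarrow> (real \<Rightarrow> real) \<Rightarrow> real" where
  "hat_d l l' = enn2real (\<integral>\<^sup>+ t. ennreal (indicator {0..} t * exp (- t) * min (levy_dist_t t l l') 1) \<partial>lborel)"

definition std_brownian_motion :: "'a measure \<Rightarrow> (real \<Rightarrow> 'a \<Rightarrow> real) \<Rightarrow> bool" where
  "std_brownian_motion P B \<longleftrightarrow>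
     prob_space P \<and>
     (\<forall>t\<ge>0. B t \<in> borel_measurable P) \<and>
     (\<forall>\<omega>\<in>space P. B 0 \<omega> = 0) \<and>
     (\<forall>\<omega>\<in>space P. continuous_on {0..} (\<lambda>t. B t \<omega>)) \<and>
     (\<forall>s t. 0 \<le> s \<and> s < t \<longrightarrow>
        distributed P lborel (\<lambda>\<omega>. B t \<omega> - B s \<omega>) (\<lambda>x. ennreal (normal_density 0 (sqrt (t - s)) x))) \<and>
     (\<forall>(n::nat) (ts::nat \<Rightarrow> real). 0 \<le> ts 0 \<and> (\<forall>i<n. ts i < ts (Suc i)) \<longrightarrow>
        prob_space.indep_vars P (\<lambda>_. borel) (\<lambda>i \<omega>. B (ts (Suc i)) \<omega> - B (ts i) \<omega>) {..<n})"

definition Xproc :: "('a \<Rightarrow> real) \<Rightarrow> real \<Rightarrow> (real \<Rightarrow> 'a \<Rightarrow> real) \<Rightarrow> (real \<Rightarrow> real)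
    \<Rightarrow> (real \<Rightarrow> real) \<Rightarrow> real \<Rightarrow> 'a \<Rightarrow> real" where
  "Xproc Z \<beta> B G l t \<omega> = Z \<omega> + \<beta> * t + B t \<omega> - G (l t)"

text \<open>tau^l = inf {t \<ge> 0. X^l_t \<le> 0} (extended real, inf of empty set = infinity)\<close>
definition tau :: "('a \<Rightarrow> real) \<Rightarrow> real \<Rightarrow> (real \<Rightarrow> 'a \<Rightarrow> real) \<Rightarrow> (real \<Rightarrow> real)
    \<Rightarrow> (real \<Rightarrow> real) \<Rightarrow> 'a \<Rightarrow> ereal" where
  "tau Z \<beta> B G l \<omega> = Inf {ereal t | t. t \<ge> 0 \<and> Xproc Z \<beta> B G l t \<omega> \<le> 0}"

definition Gamma :: "'a measure \<Rightarrow> ('a \<Rightarrow> real) \<Rightarrow> real \<Rightarrow> (real \<Rightarrow> 'a \<Rightarrow> real) \<Rightarrow> (real \<Rightarrow> real)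
    \<Rightarrow> (real \<Rightarrow> real) \<Rightarrow> real \<Rightarrow> real" where
  "Gamma P Z \<beta> B G l t = measure P {\<omega> \<in> space P. tau Z \<beta> B G l \<omega> \<le> ereal t}"

end

theory Submission
  imports Defs
begin

lemma Mset_range: assumes "l \<in> Mset" shows "0 \<le> l s" "l s \<le> 1" "mono l"
proof -
  show "mono l" using assms by (simp add: Mset_def)
  show "l s \<le> 1" using assms by (simp add: Mset_def)
  have "l (min s (-1)) = 0" using assms by (simp add: Mset_def)
  moreover have "l (min s (-1)) \<le> l s" using \<open>mono l\<close> by (simp add: monoD)
  ultimately show "0 \<le> l s" by simp
qed

lemma closure_lem:
  fixes Y G l :: "real \<Rightarrow> real" and s v e :: "nat \<Rightarrow> real" and s0 :: real
  assumes l: "l \<in> Mset" and Gc: "continuous_on {-1..1} G" and Gm: "mono_on {-1..1} G"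
    and Ylim: "(\<lambda>k. Y (s k)) \<longlonglongrightarrow> Y s0"
    and le: "\<forall>k. Y (s k) \<le> G (v k) + e k" and v: "\<forall>k. v k \<in> {-1..1}" and e: "e \<longlonglongrightarrow> 0"
    and ev: "\<forall>\<delta>>0. eventually (\<lambda>k. v k \<le> l (s0+\<delta>) + \<delta>) sequentially"
  shows "Y s0 \<le> G (l s0)"
proof (rule field_le_epsilon)
  fix \<eta> :: real assume "\<eta> > 0"
  have l0: "l s0 \<in> {-1..1}" using Mset_range(1,2)[OF l, of s0] by auto
  obtain \<rho> where \<rho>: "\<rho> > 0" "\<forall>x'\<in>{-1..1}. dist x' (l s0) < \<rho> \<longrightarrow> dist (G x') (G (l s0)) < \<eta>/2"
    using Gc l0 \<open>\<eta> > 0\<close> half_gt_zero unfolding continuous_on_iff by blast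
  have "continuous (at_right s0) l" using l by (simp add: Mset_def)
  then have lt: "(l \<longlongrightarrow> l s0) (at_right s0)" by (simp add: continuous_within)
  have "eventually (\<lambda>x. dist (l x) (l s0) < \<rho>/2) (at_right s0)"
    using tendstoD[OF lt, of "\<rho>/2"] \<rho>(1) by simp
  then obtain b where b: "b > s0" "\<And>y. y > s0 \<Longrightarrow> y < b \<Longrightarrow> dist (l y) (l s0) < \<rho>/2"
    unfolding eventually_at_right_field by blast
  define \<delta> where "\<delta> = min ((b - s0)/2) (\<rho>/2)"
  have "\<delta> > 0" using b \<rho> by (simp add: \<delta>_def)
  have "\<delta> \<le> (b - s0)/2" unfolding \<delta>_def by (rule min.cobounded1)
  then have "s0 + \<delta> < b" using b(1) by (simp add: field_simps)
  then have "dist (l (s0+\<delta>)) (l s0) < \<rho>/2" using b(2) \<open>\<delta>>0\<close> by simp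
  moreover have "\<delta> \<le> \<rho>/2" unfolding \<delta>_def by (rule min.cobounded2)
  ultimately have lb: "l (s0+\<delta>) + \<delta> < l s0 + \<rho>" unfolding dist_real_def by (smt (verit) field_sum_of_halves)
  have ev1: "eventually (\<lambda>k. v k \<le> l (s0+\<delta>) + \<delta>) sequentially" using ev \<open>\<delta>>0\<close> by blast
  have ev2: "eventually (\<lambda>k. e k < \<eta>/2) sequentially"
    using order_tendstoD(2)[OF e, of "\<eta>/2"] \<open>\<eta>>0\<close> by simp
  have "eventually (\<lambda>k. Y (s k) \<le> G (l s0) + \<eta>) sequentially"
    using ev1 ev2
  proof eventually_elim
    case (elim k)
    have "G (v k) \<le> G (l s0) + \<eta>/2"
    proof (cases "v k \<le> l s0")
      case True
      then have "G (v k) \<le> G (l s0)" using Gm v l0 by (simp add: mono_onD)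
      then show ?thesis using \<open>\<eta>>0\<close> by simp
    next
      case False
      then have "dist (v k) (l s0) < \<rho>" using elim lb by (auto simp: dist_real_def)
      then have "dist (G (v k)) (G (l s0)) < \<eta>/2" using \<rho>(2) v by blast
      then show ?thesis unfolding dist_real_def by (smt (verit) field_sum_of_halves)
    qed
    moreover have "Y (s k) \<le> G (v k) + e k" using le by blast
    ultimately show ?case using elim by (smt (verit) field_sum_of_halves)
  qed
  then show "Y s0 \<le> G (l s0) + \<eta>"
    using Ylim by (intro tendsto_upperbound) auto
qed
lemma Ycont:
  fixes B :: "real \<Rightarrow> 'a \<Rightarrow> real" and Z :: "'a \<Rightarrow> real"
  assumes "continuous_on {0..} (\<lambda>s. B s \<omega>)"
  shows "continuous_on {0..} (\<lambda>s. Z \<omega> + \<beta> * s + B s \<omega>)"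
proof -
  have "continuous_on {0..} (\<lambda>s. Z \<omega> + \<beta> * s)" by (intro continuous_intros)
  from continuous_on_add[OF this assms] show ?thesis by simp
qed

lemma tau_le_iff:
  fixes G l :: "real \<Rightarrow> real"
  assumes l: "l \<in> Mset" and Gc: "continuous_on {-1..1} G" and Gm: "mono_on {-1..1} G"
    and Bc: "continuous_on {0..} (\<lambda>s. B s \<omega>)"
  shows "tau Z \<beta> B G l \<omega> \<le> ereal t \<longleftrightarrow> (\<exists>s\<in>{0..t}. Xproc Z \<beta> B G l s \<omega> \<le> 0)"
proof
  define S where "S = {s. s \<ge> 0 \<and> Xproc Z \<beta> B G l s \<omega> \<le> 0}"
  have tS: "tau Z \<beta> B G l \<omega> = Inf (ereal ` S)" unfolding tau_def S_def
    by (rule arg_cong[where f=Inf]) auto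
  {
    assume "\<exists>s\<in>{0..t}. Xproc Z \<beta> B G l s \<omega> \<le> 0"
    then obtain s where s: "s \<in> S" "s \<le> t" unfolding S_def by auto
    have "Inf (ereal ` S) \<le> ereal s" using s by (intro Inf_lower) auto
    moreover have "ereal s \<le> ereal t" using s by simp
    ultimately show "tau Z \<beta> B G l \<omega> \<le> ereal t" using tS by (metis order_trans)
  }
  assume a: "tau Z \<beta> B G l \<omega> \<le> ereal t"
  have ne: "S \<noteq> {}"
  proof
    assume "S = {}" then show False using a tS by (simp add: top_ereal_def)
  qed
  have bb: "bdd_below S" unfolding S_def by (rule bdd_belowI[of _ 0]) auto
  define m where "m = Inf S"
  have "ereal m = Inf (ereal ` S)" unfolding m_def by (rule ereal_Inf'[OF bb ne])
  then have "ereal m \<le> ereal t" using a tS by simp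
  then have mt: "m \<le> t" by simp
  have m0: "m \<ge> 0" unfolding m_def using ne by (intro cInf_greatest) (auto simp: S_def)
  have "\<forall>k. \<exists>x\<in>S. x < m + inverse (real (Suc k))"
    using ne bb unfolding m_def by (intro allI cInf_lessD) auto
  then obtain sk where sk: "\<And>k. sk k \<in> S" "\<And>k. sk k < m + inverse (real (Suc k))"
    by metis
  have skm: "\<And>k. m \<le> sk k" using sk(1) bb unfolding m_def by (simp add: cInf_lower)
  have lim: "sk \<longlonglongrightarrow> m"
    by (rule tendsto_sandwich[of "\<lambda>_. m" _ _ "\<lambda>k. m + inverse (real (Suc k))"])
       (use skm sk(2) LIMSEQ_inverse_real_of_nat_add in \<open>auto intro: less_imp_le always_eventually\<close>)
  define Y where "Y = (\<lambda>s. Z \<omega> + \<beta> * s + B s \<omega>)"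
  have "Y m \<le> G (l m)"
  proof (rule closure_lem[OF l Gc Gm, where s=sk and v="\<lambda>k. l (sk k)" and e="\<lambda>_. 0"])
    show "(\<lambda>k. Y (sk k)) \<longlonglongrightarrow> Y m"
      unfolding Y_def
      by (rule continuous_on_tendsto_compose[OF Ycont[of B \<omega> Z \<beta>, OF Bc] lim]) (use m0 sk(1) in \<open>auto simp: S_def\<close>)
    show "\<forall>k. Y (sk k) \<le> G (l (sk k)) + 0" using sk(1) by (auto simp: S_def Xproc_def Y_def)
    show "\<forall>k. l (sk k) \<in> {-1..1}" using Mset_range(1,2)[OF l] by (auto intro: order_trans[of "-1" 0])
    show "(\<lambda>_. 0::real) \<longlonglongrightarrow> 0" by simp
    show "\<forall>\<delta>>0. \<forall>\<^sub>F k in sequentially. l (sk k) \<le> l (m + \<delta>) + \<delta>"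
    proof (intro allI impI)
      fix \<delta> :: real assume "\<delta> > 0"
      then have "eventually (\<lambda>k. sk k < m + \<delta>) sequentially"
        using lim by (intro order_tendstoD(2)) auto
      then show "\<forall>\<^sub>F k in sequentially. l (sk k) \<le> l (m + \<delta>) + \<delta>"
      proof eventually_elim
        case (elim k)
        then have "l (sk k) \<le> l (m + \<delta>)" using Mset_range(3)[OF l] by (simp add: monoD)
        then show ?case using \<open>\<delta>>0\<close> by simp
      qed
    qed
  qed
  then show "\<exists>s\<in>{0..t}. Xproc Z \<beta> B G l s \<omega> \<le> 0"
    using m0 mt by (intro bexI[of _ m]) (auto simp: Xproc_def Y_def)
qed
lemma Xright:
  fixes G l :: "real \<Rightarrow> real"
  assumes l: "l \<in> Mset" and Gc: "continuous_on {-1..1} G"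
    and Bc: "continuous_on {0..} (\<lambda>s. B s \<omega>)" and s: "s \<ge> 0"
  shows "((\<lambda>q. Xproc Z \<beta> B G l q \<omega>) \<longlongrightarrow> Xproc Z \<beta> B G l s \<omega>) (at_right s)"
proof -
  have "((\<lambda>q. B q \<omega>) \<longlongrightarrow> B s \<omega>) (at s within {0..})"
    using Bc s unfolding continuous_on_def by auto
  then have b: "((\<lambda>q. B q \<omega>) \<longlongrightarrow> B s \<omega>) (at_right s)"
    by (rule tendsto_within_subset) (use s in auto)
  have "continuous (at_right s) l" using l by (simp add: Mset_def)
  then have lt: "(l \<longlongrightarrow> l s) (at_right s)" by (simp add: continuous_within)
  have lr: "\<And>x. l x \<in> {-1..1}" using Mset_range(1,2)[OF l] by (auto intro: order_trans[of "-1" 0])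
  have g: "((\<lambda>q. G (l q)) \<longlongrightarrow> G (l s)) (at_right s)"
    using continuous_on_tendsto_compose[OF Gc lt lr] lr
    by (auto simp: o_def intro!: always_eventually)
  show ?thesis unfolding Xproc_def
    by (intro tendsto_intros b g)
qed

lemma meas_set:
  fixes P :: "'a measure" and Z :: "'a \<Rightarrow> real" and B :: "real \<Rightarrow> 'a \<Rightarrow> real"
    and G l :: "real \<Rightarrow> real"
  assumes l: "l \<in> Mset" and Gc: "continuous_on {-1..1} G" and Gm: "mono_on {-1..1} G"
    and Zm: "Z \<in> borel_measurable P" and Bm: "\<And>q. q \<ge> 0 \<Longrightarrow> B q \<in> borel_measurable P"
    and Bc: "\<And>\<omega>. \<omega> \<in> space P \<Longrightarrow> continuous_on {0..} (\<lambda>s. B s \<omega>)" and t: "t \<ge> 0"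
  shows "{\<omega>\<in>space P. \<exists>s\<in>{0..t}. Xproc Z \<beta> B G l s \<omega> \<le> 0} \<in> sets P"
proof -
  define D where "D = insert t ({0..t} \<inter> \<rat>)"
  have cD: "countable D" unfolding D_def using countable_rat by auto
  have D0: "\<And>q. q \<in> D \<Longrightarrow> 0 \<le> q \<and> q \<le> t" using t by (auto simp: D_def)
  have eq: "{\<omega>\<in>space P. \<exists>s\<in>{0..t}. Xproc Z \<beta> B G l s \<omega> \<le> 0}
     = {\<omega>\<in>space P. \<forall>k::nat. \<exists>q\<in>D. Xproc Z \<beta> B G l q \<omega> < inverse (real (Suc k))}"
  proof (intro Collect_cong conj_cong refl iffI allI)
    fix \<omega> k assume \<omega>: "\<omega> \<in> space P" and "\<exists>s\<in>{0..t}. Xproc Z \<beta> B G l s \<omega> \<le> 0"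
    then obtain s where s: "0 \<le> s" "s \<le> t" "Xproc Z \<beta> B G l s \<omega> \<le> 0" by auto
    show "\<exists>q\<in>D. Xproc Z \<beta> B G l q \<omega> < inverse (real (Suc k))"
    proof (cases "s = t")
      case True
      have "0 < inverse (real (Suc k))" by simp
      then have "Xproc Z \<beta> B G l t \<omega> < inverse (real (Suc k))" using s(3) True
        by (metis le_less_trans)
      then show ?thesis by (intro bexI[of _ t]) (auto simp: D_def)
    next
      case False
      have "eventually (\<lambda>q. Xproc Z \<beta> B G l q \<omega> < inverse (real (Suc k))) (at_right s)"
        using order_tendstoD(2)[OF Xright[where B=B and \<omega>=\<omega> and Z=Z and \<beta>=\<beta>, OF l Gc Bc[OF \<omega>] s(1)], of "inverse (real (Suc k))"] s(3)
        by (smt (verit) inverse_positive_iff_positive of_nat_0_less_iff zero_less_Suc)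
      then obtain b where b: "b > s" "\<And>y. y > s \<Longrightarrow> y < b \<Longrightarrow> Xproc Z \<beta> B G l y \<omega> < inverse (real (Suc k))"
        unfolding eventually_at_right_field by blast
      have "s < min b t" using b False s by simp
      then obtain q where q: "q \<in> \<rat>" "s < q" "q < min b t" using Rats_dense_in_real by blast
      then show ?thesis using b s by (intro bexI[of _ q]) (auto simp: D_def)
    qed
  next
    fix \<omega> assume \<omega>: "\<omega> \<in> space P" and a: "\<forall>k::nat. \<exists>q\<in>D. Xproc Z \<beta> B G l q \<omega> < inverse (real (Suc k))"
    then obtain q where q: "\<And>k. q k \<in> D" "\<And>k. Xproc Z \<beta> B G l (q k) \<omega> < inverse (real (Suc k))"
      by metis
    have "\<forall>k. q k \<in> {0..t}" using q(1) D0 by auto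
    then obtain s r where sr: "s \<in> {0..t}" "strict_mono r" "(q \<circ> r) \<longlonglongrightarrow> s"
      using compact_imp_seq_compact[OF compact_Icc] unfolding seq_compact_def by metis
    define Y where "Y = (\<lambda>s. Z \<omega> + \<beta> * s + B s \<omega>)"
    have "Y s \<le> G (l s)"
    proof (rule closure_lem[OF l Gc Gm, where s="q \<circ> r" and v="\<lambda>k. l (q (r k))" and e="\<lambda>k. inverse (real (Suc (r k)))"])
      show "(\<lambda>k. Y ((q \<circ> r) k)) \<longlonglongrightarrow> Y s"
        unfolding Y_def
        by (rule continuous_on_tendsto_compose[OF Ycont[of B \<omega> Z \<beta>, OF Bc[OF \<omega>]] sr(3)])
          (use sr(1) q(1) D0 in auto)
      show "\<forall>k. Y ((q \<circ> r) k) \<le> G (l (q (r k))) + inverse (real (Suc (r k)))"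
      proof
        fix k
        have "Xproc Z \<beta> B G l (q (r k)) \<omega> < inverse (real (Suc (r k)))" by (rule q(2))
        then show "Y ((q \<circ> r) k) \<le> G (l (q (r k))) + inverse (real (Suc (r k)))"
          unfolding Xproc_def Y_def o_def by linarith
      qed
      show "\<forall>k. l (q (r k)) \<in> {-1..1}" using Mset_range(1,2)[OF l] by (auto intro: order_trans[of "-1" 0])
      have "(\<lambda>k. inverse (real (Suc k))) \<longlonglongrightarrow> 0" using LIMSEQ_inverse_real_of_nat by simp
      from LIMSEQ_subseq_LIMSEQ[OF this sr(2)]
      show "(\<lambda>k. inverse (real (Suc (r k)))) \<longlonglongrightarrow> 0" by (simp add: o_def)
      show "\<forall>\<delta>>0. \<forall>\<^sub>F k in sequentially. l (q (r k)) \<le> l (s + \<delta>) + \<delta>"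
      proof (intro allI impI)
        fix \<delta> :: real assume "\<delta> > 0"
        then have "eventually (\<lambda>k. (q \<circ> r) k < s + \<delta>) sequentially"
          using order_tendstoD(2)[OF sr(3), of "s + \<delta>"] by simp
        then show "\<forall>\<^sub>F k in sequentially. l (q (r k)) \<le> l (s + \<delta>) + \<delta>"
        proof eventually_elim
          case (elim k)
          then have "l (q (r k)) \<le> l (s + \<delta>)" using Mset_range(3)[OF l] by (simp add: monoD)
          then show ?case using \<open>\<delta>>0\<close> by simp
        qed
      qed
    qed
    then show "\<exists>s\<in>{0..t}. Xproc Z \<beta> B G l s \<omega> \<le> 0"
      using sr(1) by (intro bexI[of _ s]) (auto simp: Xproc_def Y_def)
  qed
  have mX: "\<And>q. q \<in> D \<Longrightarrow> Xproc Z \<beta> B G l q \<in> borel_measurable P"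
    unfolding Xproc_def using Zm Bm D0 by (intro borel_measurable_diff borel_measurable_add) auto
  show ?thesis unfolding eq
  proof (rule sets.sets_Collect_countable_All)
    fix k :: nat
    show "{\<omega>\<in>space P. \<exists>q\<in>D. Xproc Z \<beta> B G l q \<omega> < inverse (real (Suc k))} \<in> sets P"
    proof (rule sets.sets_Collect_countable_Ex'[OF _ cD])
      fix q assume "q \<in> D"
      from mX[OF this] show "{\<omega>\<in>space P. Xproc Z \<beta> B G l q \<omega> < inverse (real (Suc k))} \<in> sets P"
        by measurable
    qed
  qed
qed
lemma exp_int_finite: "(\<integral>\<^sup>+ x. ennreal (exponential_density 1 x) \<partial>lborel) = 1"
proof -
  interpret prob_space "density lborel (exponential_density 1)"
    by (rule prob_space_exponential_density) simp
  have "emeasure (density lborel (exponential_density 1)) UNIV = 1"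
    using emeasure_space_1 by simp
  then show ?thesis by (simp add: emeasure_density)
qed

lemma hat_d_finite:
  "(\<integral>\<^sup>+ t. ennreal (indicator {0..} t * exp (- t) * min (levy_dist_t t f g) 1) \<partial>lborel) < \<infinity>"
proof -
  have "(\<integral>\<^sup>+ t. ennreal (indicator {0..} t * exp (- t) * min (levy_dist_t t f g) 1) \<partial>lborel)
     \<le> (\<integral>\<^sup>+ x. ennreal (exponential_density 1 x) \<partial>lborel)"
  proof (rule nn_integral_mono)
    fix x :: real
    have "indicator {0..} x * exp (- x) * min (levy_dist_t x f g) 1 \<le> exponential_density 1 x"
    proof (cases "x < 0")
      case True then show ?thesis by (simp add: exponential_density_def)
    next
      case False
      then have "exp (- x) * min (levy_dist_t x f g) 1 \<le> exp (- x) * 1"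
        by (intro mult_left_mono) auto
      then show ?thesis using False by (simp add: exponential_density_def)
    qed
    then show "ennreal (indicator {0..} x * exp (- x) * min (levy_dist_t x f g) 1) \<le> ennreal (exponential_density 1 x)"
      by (rule ennreal_leI)
  qed
  also have "\<dots> = 1" by (rule exp_int_finite)
  also have "(1::ennreal) < \<infinity>" by simp
  finally show ?thesis .
qed
definition levy_set :: "(real \<Rightarrow> real) \<Rightarrow> (real \<Rightarrow> real) \<Rightarrow> real set" where
  "levy_set l l' = {\<epsilon>. \<epsilon> > 0 \<and>
      (\<forall>t\<ge>0. l (t + \<epsilon>) + \<epsilon> \<ge> l' t \<and> l' t \<ge> l (t - \<epsilon>) - \<epsilon>)}"

lemma levy_one:
  assumes f: "f \<in> Mset" and g: "g \<in> Mset"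
  shows "1 \<in> levy_set (stopped T f) (stopped T g)"
proof -
  have a: "\<And>x. 0 \<le> f x" "\<And>x. f x \<le> 1" "\<And>x. 0 \<le> g x" "\<And>x. g x \<le> 1"
    using Mset_range(1,2)[OF f] Mset_range(1,2)[OF g] by auto
  have h1: "g y \<le> f x + 1" for x y using a(1)[of x] a(4)[of y] by linarith
  have h2: "f x - 1 \<le> g y" for x y using a(2)[of x] a(3)[of y] by linarith
  show ?thesis unfolding levy_set_def stopped_def using h1 h2 by auto
qed

lemma choose_T:
  assumes f: "f \<in> Mset" and g: "g \<in> Mset" and t: "t \<ge> 0" and c: "c > 0"
  shows "\<exists>T \<epsilon>. T \<ge> t \<and> 0 < \<epsilon> \<and> \<epsilon> < exp (t+1) * hat_d f g + c \<and>
           (\<forall>u\<ge>0. stopped T g u \<ge> stopped T f (u - \<epsilon>) - \<epsilon>)"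
proof -
  define I where "I = (\<integral>\<^sup>+ t. ennreal (indicator {0..} t * exp (- t) * min (levy_dist_t t f g) 1) \<partial>lborel)"
  have If: "I < \<infinity>" unfolding I_def by (rule hat_d_finite)
  have hI: "I = ennreal (hat_d f g)" unfolding hat_d_def I_def[symmetric] using If
    by (simp add: less_top)
  have h0: "hat_d f g \<ge> 0" unfolding hat_d_def by simp
  define e where "e = exp (t+1) * hat_d f g + c"
  have e0: "e > 0" unfolding e_def using h0 c by (simp add: add_nonneg_pos)
  have "\<exists>T\<in>{t..t+1}. min (levy_dist_t T f g) 1 < e"
  proof (rule ccontr)
    assume "\<not> ?thesis"
    then have ge: "\<And>T. T \<in> {t..t+1} \<Longrightarrow> e \<le> min (levy_dist_t T f g) 1" by (simp add: not_less)
    have "(\<integral>\<^sup>+ x. ennreal (exp (-(t+1)) * e) * indicator {t..t+1} x \<partial>lborel) \<le> I"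
      unfolding I_def
    proof (rule nn_integral_mono)
      fix x :: real
      show "ennreal (exp (-(t+1)) * e) * indicator {t..t+1} x
          \<le> ennreal (indicator {0..} x * exp (- x) * min (levy_dist_t x f g) 1)"
      proof (cases "x \<in> {t..t+1}")
        case True
        have "exp (-(t+1)) \<le> exp (-x)" using True by simp
        then have "exp (-(t+1)) * e \<le> exp (-x) * min (levy_dist_t x f g) 1"
          using ge[OF True] e0 by (intro mult_mono) auto
        moreover have "indicator {0..} x = (1::real)" using True t by simp
        ultimately show ?thesis using True by (simp add: ennreal_leI)
      qed simp
    qed
    also have "(\<integral>\<^sup>+ x. ennreal (exp (-(t+1)) * e) * indicator {t..t+1} x \<partial>lborel)
       = ennreal (exp (-(t+1)) * e)"
      by (simp add: nn_integral_cmult_indicator)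
    finally have "exp (-(t+1)) * e \<le> hat_d f g" using hI h0 by simp
    moreover have "exp (-(t+1)) * e = hat_d f g + exp (-(t+1)) * c"
    proof -
      have ee: "exp (-(t+1)) * exp (t+1) = 1" by (simp flip: exp_add)
      show ?thesis unfolding e_def distrib_left mult.assoc[symmetric] ee by simp
    qed
    moreover have "exp (-(t+1)) * c > 0" using c by simp
    ultimately show False by linarith
  qed
  then obtain T where T: "T \<in> {t..t+1}" "min (levy_dist_t T f g) 1 < e" by blast
  have "\<exists>\<epsilon>\<in>levy_set (stopped T f) (stopped T g). \<epsilon> < e"
  proof (cases "levy_dist_t T f g < 1")
    case True
    then have "Inf (levy_set (stopped T f) (stopped T g)) < e"
      using T(2) unfolding levy_dist_t_def levy_dist_def levy_set_def by simp
    moreover have "bdd_below (levy_set (stopped T f) (stopped T g))"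
      by (rule bdd_belowI[of _ 0]) (simp add: levy_set_def)
    moreover have "levy_set (stopped T f) (stopped T g) \<noteq> {}" using levy_one[OF f g, of T] by blast
    ultimately show ?thesis using cInf_less_iff by blast
  next
    case False
    then show ?thesis using T(2) levy_one[OF f g] by auto
  qed
  then obtain \<epsilon> where \<epsilon>: "\<epsilon> \<in> levy_set (stopped T f) (stopped T g)" "\<epsilon> < e" by blast
  show ?thesis
    using \<epsilon> T(1) unfolding e_def levy_set_def by (intro exI[of _ T] exI[of _ \<epsilon>]) auto
qed
lemma key_ineq:
  assumes g: "g \<in> Mset" and T: "T \<ge> t" and s: "0 \<le> s" "s \<le> t" and \<epsilon>: "\<epsilon> > 0"
    and h: "\<forall>u\<ge>0. stopped T g u \<ge> stopped T f (u - \<epsilon>) - \<epsilon>"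
  shows "f s \<le> g (s + \<epsilon>) + \<epsilon>"
proof -
  have "stopped T g (s + \<epsilon>) \<ge> stopped T f (s + \<epsilon> - \<epsilon>) - \<epsilon>" using h s \<epsilon> by (intro h[rule_format]) simp
  then have "stopped T g (s + \<epsilon>) \<ge> stopped T f s - \<epsilon>" by simp
  then have "g (min T (s + \<epsilon>)) \<ge> f s - \<epsilon>" using s T by (simp add: stopped_def)
  moreover have "g (min T (s + \<epsilon>)) \<le> g (s + \<epsilon>)" using Mset_range(3)[OF g] by (simp add: monoD)
  ultimately show ?thesis by linarith
qed

theorem lemma3p1:
  fixes P :: "'a measure" and Z :: "'a \<Rightarrow> real" and B :: "real \<Rightarrow> 'a \<Rightarrow> real"
    and G :: "real \<Rightarrow> real" and \<beta> :: real
    and ls :: "nat \<Rightarrow> real \<Rightarrow> real" and l :: "real \<Rightarrow> real"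
  assumes "prob_space P"
    and "continuous_on {-1..1} G" and "mono_on {-1..1} G" and "G 0 = 0"
    and "Z \<in> borel_measurable P"
    and "std_brownian_motion P B"
    and "prob_space.indep_set P (sets (vimage_algebra (space P) Z borel))
           (sets (vimage_algebra (space P) (\<lambda>\<omega>. restrict (\<lambda>t. B t \<omega>) {0..})
                    (Pi\<^sub>M {0..} (\<lambda>_. borel))))"
    and "\<forall>n. ls n \<in> Mset" and "l \<in> Mset"
    and "(\<lambda>n. hat_d (ls n) l) \<longlonglongrightarrow> 0"
  shows "\<forall>t\<ge>0. limsup (\<lambda>n. ereal (Gamma P Z \<beta> B G (ls n) t)) \<le> ereal (Gamma P Z \<beta> B G l t)"
proof (intro allI impI)
  fix t :: real assume t: "t \<ge> 0"
  interpret prob_space P by fact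
  note Gc = assms(2) and Gm = assms(3) and Zm = assms(5) and lsM = assms(8) and lM = assms(9)
  have Bm: "\<And>q. q \<ge> 0 \<Longrightarrow> B q \<in> borel_measurable P"
    using assms(6) unfolding std_brownian_motion_def by blast
  have Bc: "\<And>\<omega>. \<omega> \<in> space P \<Longrightarrow> continuous_on {0..} (\<lambda>s. B s \<omega>)"
    using assms(6) unfolding std_brownian_motion_def by blast
  define e where "e n = exp (t+1) * hat_d (ls n) l + inverse (real (Suc n))" for n
  have "\<forall>n. \<exists>T \<epsilon>. T \<ge> t \<and> 0 < \<epsilon> \<and> \<epsilon> < e n \<and>
           (\<forall>u\<ge>0. stopped T l u \<ge> stopped T (ls n) (u - \<epsilon>) - \<epsilon>)"
    unfolding e_def using lsM lM t by (intro allI choose_T) auto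
  then have "\<exists>TT. \<forall>n. \<exists>\<epsilon>. TT n \<ge> t \<and> 0 < \<epsilon> \<and> \<epsilon> < e n \<and>
           (\<forall>u\<ge>0. stopped (TT n) l u \<ge> stopped (TT n) (ls n) (u - \<epsilon>) - \<epsilon>)"
    by (rule choice)
  then obtain TT where "\<forall>n. \<exists>\<epsilon>. TT n \<ge> t \<and> 0 < \<epsilon> \<and> \<epsilon> < e n \<and>
           (\<forall>u\<ge>0. stopped (TT n) l u \<ge> stopped (TT n) (ls n) (u - \<epsilon>) - \<epsilon>)"
    by (elim exE)
  then have "\<exists>\<epsilon>\<epsilon>. \<forall>n. TT n \<ge> t \<and> 0 < \<epsilon>\<epsilon> n \<and> \<epsilon>\<epsilon> n < e n \<and>
           (\<forall>u\<ge>0. stopped (TT n) l u \<ge> stopped (TT n) (ls n) (u - \<epsilon>\<epsilon> n) - \<epsilon>\<epsilon> n)"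
    by (rule choice)
  then obtain \<epsilon>\<epsilon> where TTa: "\<forall>n. TT n \<ge> t \<and> 0 < \<epsilon>\<epsilon> n \<and> \<epsilon>\<epsilon> n < e n \<and>
           (\<forall>u\<ge>0. stopped (TT n) l u \<ge> stopped (TT n) (ls n) (u - \<epsilon>\<epsilon> n) - \<epsilon>\<epsilon> n)"
    by (elim exE)
  have TT: "\<And>n. TT n \<ge> t" "\<And>n. 0 < \<epsilon>\<epsilon> n" "\<And>n. \<epsilon>\<epsilon> n < e n"
    "\<And>n. \<forall>u\<ge>0. stopped (TT n) l u \<ge> stopped (TT n) (ls n) (u - \<epsilon>\<epsilon> n) - \<epsilon>\<epsilon> n"
    using TTa by blast+
  have elim: "e \<longlonglongrightarrow> 0"
  proof -
    have "(\<lambda>n. exp (t+1) * hat_d (ls n) l) \<longlonglongrightarrow> exp (t+1) * 0"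
      by (intro tendsto_mult tendsto_const assms(10))
    moreover have "(\<lambda>n. inverse (real (Suc n))) \<longlonglongrightarrow> 0"
      using LIMSEQ_inverse_real_of_nat by simp
    ultimately show ?thesis unfolding e_def using tendsto_add by fastforce
  qed
  define A where "A n = {\<omega>\<in>space P. \<exists>s\<in>{0..t}. Xproc Z \<beta> B G (ls n) s \<omega> \<le> 0}" for n
  define A0 where "A0 = {\<omega>\<in>space P. \<exists>s\<in>{0..t}. Xproc Z \<beta> B G l s \<omega> \<le> 0}"
  have GA: "Gamma P Z \<beta> B G (ls n) t = measure P (A n)" for n
    unfolding Gamma_def A_def
    by (intro arg_cong[where f="measure P"] Collect_cong conj_cong refl)
       (rule tau_le_iff[where B=B, OF lsM[rule_format] Gc Gm Bc])
  have GA0: "Gamma P Z \<beta> B G l t = measure P A0"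
    unfolding Gamma_def A0_def
    by (intro arg_cong[where f="measure P"] Collect_cong conj_cong refl)
       (rule tau_le_iff[where B=B, OF lM Gc Gm Bc])
  have Asets: "A n \<in> sets P" for n
    unfolding A_def by (rule meas_set[OF lsM[rule_format] Gc Gm Zm Bm Bc t])
  have A0sets: "A0 \<in> sets P"
    unfolding A0_def by (rule meas_set[OF lM Gc Gm Zm Bm Bc t])
  define C where "C m = (\<Union>n\<in>{m..}. A n)" for m
  have Csets: "range C \<subseteq> sets P" unfolding C_def using Asets by auto
  have Cdec: "decseq C" unfolding C_def decseq_def by auto (meson atLeast_iff order_trans)
  have Clim: "(\<lambda>m. measure P (C m)) \<longlonglongrightarrow> measure P (\<Inter>m. C m)"
    by (rule finite_Lim_measure_decseq[OF Csets Cdec])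
  have sub: "(\<Inter>m. C m) \<subseteq> A0"
  proof
    fix \<omega> assume \<omega>C: "\<omega> \<in> (\<Inter>m. C m)"
    then have \<omega>: "\<omega> \<in> space P" unfolding C_def A_def by auto
    define N where "N = {n. \<omega> \<in> A n}"
    have "infinite N" unfolding infinite_nat_iff_unbounded_le N_def
      using \<omega>C unfolding C_def by auto
    from infinite_enumerate[OF \<open>infinite N\<close>]
    obtain r :: "nat \<Rightarrow> nat" where r0: "strict_mono r \<and> (\<forall>n. r n \<in> N)" by (elim exE)
    then have r: "strict_mono r" "\<And>k. r k \<in> N" by simp_all
    have "\<forall>k. \<exists>s\<in>{0..t}. Xproc Z \<beta> B G (ls (r k)) s \<omega> \<le> 0"
      using r(2) unfolding N_def A_def by auto
    then obtain sk where sk: "\<And>k. sk k \<in> {0..t}" "\<And>k. Xproc Z \<beta> B G (ls (r k)) (sk k) \<omega> \<le> 0"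
      by metis
    obtain s \<phi> where s\<phi>: "s \<in> {0..t}" "strict_mono \<phi>" "(sk \<circ> \<phi>) \<longlonglongrightarrow> s"
      using compact_imp_seq_compact[OF compact_Icc] sk(1) unfolding seq_compact_def by metis
    define M where "M = r \<circ> \<phi>"
    have Mm: "strict_mono M" unfolding M_def using r(1) s\<phi>(2) by (rule strict_mono_o)
    have eM: "(\<lambda>k. e (M k)) \<longlonglongrightarrow> 0" using LIMSEQ_subseq_LIMSEQ[OF elim Mm] by (simp add: o_def)
    have \<epsilon>M: "(\<lambda>k. \<epsilon>\<epsilon> (M k)) \<longlonglongrightarrow> 0"
      by (rule tendsto_sandwich[of "\<lambda>_. 0" _ _ "\<lambda>k. e (M k)"])
         (use TT(2,3) eM in \<open>auto intro: less_imp_le always_eventually\<close>)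
    define Y where "Y = (\<lambda>s. Z \<omega> + \<beta> * s + B s \<omega>)"
    have "Y s \<le> G (l s)"
    proof (rule closure_lem[OF lM Gc Gm, where s="sk \<circ> \<phi>" and v="\<lambda>k. ls (M k) (sk (\<phi> k))" and e="\<lambda>_. 0"])
      show "(\<lambda>k. Y ((sk \<circ> \<phi>) k)) \<longlonglongrightarrow> Y s"
        unfolding Y_def
        by (rule continuous_on_tendsto_compose[OF Ycont[of B \<omega> Z \<beta>, OF Bc[OF \<omega>]] s\<phi>(3)])
          (use s\<phi>(1) sk(1) in auto)
      show "\<forall>k. Y ((sk \<circ> \<phi>) k) \<le> G (ls (M k) (sk (\<phi> k))) + 0"
      proof
        fix k
        have "Xproc Z \<beta> B G (ls (r (\<phi> k))) (sk (\<phi> k)) \<omega> \<le> 0" by (rule sk(2))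
        then show "Y ((sk \<circ> \<phi>) k) \<le> G (ls (M k) (sk (\<phi> k))) + 0"
          unfolding Xproc_def Y_def o_def M_def by linarith
      qed
      show "\<forall>k. ls (M k) (sk (\<phi> k)) \<in> {-1..1}"
        using Mset_range(1,2)[OF lsM[rule_format]] by (auto intro: order_trans[of "-1" 0])
      show "(\<lambda>_. 0::real) \<longlonglongrightarrow> 0" by simp
      show "\<forall>\<delta>>0. \<forall>\<^sub>F k in sequentially. ls (M k) (sk (\<phi> k)) \<le> l (s + \<delta>) + \<delta>"
      proof (intro allI impI)
        fix \<delta> :: real assume "\<delta> > 0"
        then have "\<delta>/2 > 0" by simp
        have ev1: "eventually (\<lambda>k. (sk \<circ> \<phi>) k < s + \<delta>/2) sequentially"
          using order_tendstoD(2)[OF s\<phi>(3), of "s + \<delta>/2"] \<open>\<delta>/2 > 0\<close> by simp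
        have ev2: "eventually (\<lambda>k. \<epsilon>\<epsilon> (M k) < \<delta>/2) sequentially"
          using order_tendstoD(2)[OF \<epsilon>M, of "\<delta>/2"] \<open>\<delta>/2 > 0\<close> by simp
        show "\<forall>\<^sub>F k in sequentially. ls (M k) (sk (\<phi> k)) \<le> l (s + \<delta>) + \<delta>"
          using ev1 ev2
        proof eventually_elim
          case (elim k)
          have "ls (M k) (sk (\<phi> k)) \<le> l (sk (\<phi> k) + \<epsilon>\<epsilon> (M k)) + \<epsilon>\<epsilon> (M k)"
            using key_ineq[OF lM TT(1)[of "M k"] _ _ TT(2)[of "M k"] TT(4)[of "M k"]] sk(1)[of "\<phi> k"]
            by auto
          moreover have "sk (\<phi> k) + \<epsilon>\<epsilon> (M k) \<le> s + \<delta>" using elim by (simp add: field_simps)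
          then have "l (sk (\<phi> k) + \<epsilon>\<epsilon> (M k)) \<le> l (s + \<delta>)" using Mset_range(3)[OF lM] by (simp add: monoD)
          moreover have "\<epsilon>\<epsilon> (M k) \<le> \<delta>" using elim TT(2)[of "M k"] by (smt (verit) field_sum_of_halves)
          ultimately show ?case by linarith
        qed
      qed
    qed
    then show "\<omega> \<in> A0"
      unfolding A0_def using \<omega> s\<phi>(1) by (auto simp: Xproc_def Y_def intro!: bexI[of _ s])
  qed
  have "limsup (\<lambda>n. ereal (Gamma P Z \<beta> B G (ls n) t)) \<le> limsup (\<lambda>n. ereal (measure P (C n)))"
    unfolding GA
  proof (rule Limsup_mono[OF always_eventually], intro allI)
    fix n
    have "A n \<subseteq> C n" unfolding C_def by auto
    then show "ereal (measure P (A n)) \<le> ereal (measure P (C n))"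
      using Csets Asets by (auto intro!: finite_measure_mono)
  qed
  also have "\<dots> = ereal (measure P (\<Inter>m. C m))"
    by (intro lim_imp_Limsup) (auto intro: Clim)
  also have "\<dots> \<le> ereal (measure P A0)"
    using sub A0sets by (auto intro!: finite_measure_mono)
  finally show "limsup (\<lambda>n. ereal (Gamma P Z \<beta> B G (ls n) t)) \<le> ereal (Gamma P Z \<beta> B G l t)"
    unfolding GA0 .
qed
end
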